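(* Suppose that for the given $n$, $\theta_{n,1}\ge\theta_{n,2}\ge\cdots\ge\theta_{n,M_n}$. Then $$\min_{\mathbf w\in\mathcal W_n}R_n(\mathbf w)=\mathrm{tr}(\mathbf P_1\boldsymbol\Omega)+\sum_{m=2}^{M_n}\frac{a_m b_m}{a_m+b_m}+\boldsymbol\mu^\top(\mathbf I_n-\mathbf P_{M_n})\boldsymbol\mu,$$ attained at $w_m=\gamma_m-\gamma_{m+1}$ ($m<M_n$), $w_{M_n}=\gamma_{M_n}$, with $\gamma_1=1$ and $\gamma_m=a_m/(a_m+b_m)$ for $m\ge2$; $$\min_{\mathbf w\in\mathcal Q_n}R_n(\mathbf w)=\sum_{m=1}^{M_n}\frac{a_m b_m}{a_m+b_m}+\boldsymbol\mu^\top(\mathbf I_n-\mathbf P_{M_n})\boldsymbol\mu;$$ and consequently $$\min_{\mathcal W_n}R_n-\min_{\mathcal Q_n}R_n=\frac{\{\mathrm{tr}(\mathbf P_1\boldsymbol\Omega)\}^2}{\boldsymbol\mu^\top\mathbf P_1\boldsymbol\mu+\mathrm{tr}(\mathbf P_1\boldsymbol\Omega)}\le\mathrm{tr}(\mathbf P_1\boldsymbol\Omega).$$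
   Context: Fix $n$. Let $\mathbf y=\boldsymbol\mu+\boldsymbol\varepsilon\in\mathbb R^n$ with $\boldsymbol\mu$ deterministic, $E\boldsymbol\varepsilon=\mathbf 0$, $\mathrm{Cov}(\boldsymbol\varepsilon)=\boldsymbol\Omega$ positive definite. Let $\mathbf X$ be a nonstochastic $n\times p$ matrix, integers $0=\nu_0<\nu_1<\cdots<\nu_{M_n}\le p$ with $M_n\ge2$, $\mathbf X_m$ the first $\nu_m$ columns of $\mathbf X$ (full column rank), $\mathbf P_m=\mathbf X_m(\mathbf X_m^\top\mathbf X_m)^{-1}\mathbf X_m^\top$, $\mathbf P_0=\mathbf 0$. For $\mathbf w\in\mathbb R^{M_n}$, $R_n(\mathbf w)=E\|\sum_{m=1}^{M_n}w_m\mathbf P_m\mathbf y-\boldsymbol\mu\|^2$. $\mathcal W_n=\{\mathbf w\in[0,1]^{M_n}:\sum_m w_m=1\}$, $\mathcal Q_n=[0,1]^{M_n}$. Write $a_m=\boldsymbol\mu^\top(\mathbf P_m-\mathbf P_{m-1})\boldsymbol\mu$, $b_m=\mathrm{tr}\{(\mathbf P_m-\mathbf P_{m-1})\boldsymbol\Omega\}$ and $\theta_{n,m}=a_m/(n b_m)$. *)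

theory Defs
  imports "HOL-Probability.Probability" "Jordan_Normal_Form.Gauss_Jordan_Elimination"
begin

definition mtrace :: "real mat \<Rightarrow> real" where
  "mtrace A = (\<Sum>i<dim_row A. A $$ (i,i))"

definition Xsub :: "real mat \<Rightarrow> nat \<Rightarrow> real mat" where
  "Xsub X k = mat (dim_row X) k (\<lambda>(i,j). X $$ (i,j))"

definition hatm :: "real mat \<Rightarrow> nat \<Rightarrow> real mat" where
  "hatm X k = (if k = 0 then 0\<^sub>m (dim_row X) (dim_row X)
     else Xsub X k * the (mat_inverse (transpose_mat (Xsub X k) * Xsub X k)) * transpose_mat (Xsub X k))"

definition Pm :: "real mat \<Rightarrow> (nat \<Rightarrow> nat) \<Rightarrow> nat \<Rightarrow> real mat" where
  "Pm X \<nu> m = hatm X (\<nu> m)"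

definition acoef :: "real mat \<Rightarrow> (nat \<Rightarrow> nat) \<Rightarrow> real vec \<Rightarrow> nat \<Rightarrow> real" where
  "acoef X \<nu> \<mu> m = \<mu> \<bullet> ((Pm X \<nu> m - Pm X \<nu> (m - 1)) *\<^sub>v \<mu>)"

definition bcoef :: "real mat \<Rightarrow> (nat \<Rightarrow> nat) \<Rightarrow> real mat \<Rightarrow> nat \<Rightarrow> real" where
  "bcoef X \<nu> \<Omega> m = mtrace ((Pm X \<nu> m - Pm X \<nu> (m - 1)) * \<Omega>)"

definition Pw :: "real mat \<Rightarrow> (nat \<Rightarrow> nat) \<Rightarrow> nat \<Rightarrow> (nat \<Rightarrow> real) \<Rightarrow> real mat" where
  "Pw X \<nu> M w = mat (dim_row X) (dim_row X) (\<lambda>(i,j). \<Sum>m=1..M. w m * Pm X \<nu> m $$ (i,j))"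

definition risk :: "'a measure \<Rightarrow> ('a \<Rightarrow> real vec) \<Rightarrow> real mat \<Rightarrow> (nat \<Rightarrow> nat) \<Rightarrow> nat
    \<Rightarrow> real vec \<Rightarrow> (nat \<Rightarrow> real) \<Rightarrow> real" where
  "risk Pr \<epsilon> X \<nu> M \<mu> w =
     (\<integral>\<omega>. (let d = Pw X \<nu> M w *\<^sub>v (\<mu> + \<epsilon> \<omega>) - \<mu> in d \<bullet> d) \<partial>Pr)"

definition Wset :: "nat \<Rightarrow> (nat \<Rightarrow> real) set" where
  "Wset M = {w. (\<forall>m\<in>{1..M}. 0 \<le> w m \<and> w m \<le> 1) \<and> (\<Sum>m=1..M. w m) = 1}"

definition Qset :: "nat \<Rightarrow> (nat \<Rightarrow> real) set" where
  "Qset M = {w. \<forall>m\<in>{1..M}. 0 \<le> w m \<and> w m \<le> 1}"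

end

theory Submission
  imports Defs "Jordan_Normal_Form.Determinant"
begin

lemma Xsub_carrier[simp]: "Xsub X k \<in> carrier_mat (dim_row X) k" by (simp add: Xsub_def)
lemma Xsub_dims[simp]: "dim_row (Xsub X k) = dim_row X" "dim_col (Xsub X k) = k" by (simp_all add: Xsub_def)
lemma Xsub_mv_carrier[simp]: "Xsub X k *\<^sub>v v \<in> carrier_vec (dim_row X)" unfolding carrier_vec_def by auto

definition Sel :: "nat \<Rightarrow> nat \<Rightarrow> real mat" where
  "Sel l k = mat l k (\<lambda>(i,j). if i = j then 1 else 0)"

lemma Sel_carrier[simp]: "Sel l k \<in> carrier_mat l k" by (simp add: Sel_def)

lemma Xsub_nest: assumes "k \<le> l"
  shows "Xsub X k = Xsub X l * Sel l k"
proof (rule eq_matI)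
  fix i j assume i: "i < dim_row (Xsub X l * Sel l k)" and j: "j < dim_col (Xsub X l * Sel l k)"
  hence i': "i < dim_row X" and j': "j < k" by (auto simp: Sel_def Xsub_def)
  have "(Xsub X l * Sel l k) $$ (i,j) = (\<Sum>t\<in>{0..<l}. X $$ (i,t) * (if t = j then 1 else 0))"
    using i' j' assms by (simp add: Sel_def Xsub_def scalar_prod_def row_def col_def)
  also have "\<dots> = X $$ (i,j)" using j' assms
    by (simp add: if_distrib sum.delta cong: if_cong)
  finally show "Xsub X k $$ (i, j) = (Xsub X l * Sel l k) $$ (i, j)"
    using i' j' by (simp add: Xsub_def)
qed (auto simp: Sel_def Xsub_def)

lemma self_sp_zero:
  fixes y :: "real vec"
  assumes "y \<in> carrier_vec N" "y \<bullet> y = 0" shows "y = 0\<^sub>v N"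
proof -
  have "(\<Sum>i\<in>{0..<N}. y $ i * y $ i) = 0" using assms by (simp add: scalar_prod_def)
  hence "\<forall>i\<in>{0..<N}. y $ i * y $ i = 0"
    by (subst sum_nonneg_eq_0_iff[symmetric]) auto
  thus ?thesis using assms by (intro eq_vecI) auto
qed

lemma gram_inv:
  fixes X :: "real mat"
  assumes inj: "\<forall>v\<in>carrier_vec k. Xsub X k *\<^sub>v v = 0\<^sub>v (dim_row X) \<longrightarrow> v = 0\<^sub>v k"
  defines "G \<equiv> transpose_mat (Xsub X k) * Xsub X k"
  shows "\<exists>Gi. Gi \<in> carrier_mat k k \<and> mat_inverse G = Some Gi \<and> G * Gi = 1\<^sub>m k
            \<and> Gi * G = 1\<^sub>m k \<and> transpose_mat Gi = Gi"
proof -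
  let ?X = "Xsub X k" let ?N = "dim_row X"
  have G: "G \<in> carrier_mat k k" unfolding G_def by (rule mult_carrier_mat[of _ k "dim_row X"]) auto
  have "det G \<noteq> 0"
  proof
    assume "det G = 0"
    then obtain v where v: "v \<in> carrier_vec k" "v \<noteq> 0\<^sub>v k" "G *\<^sub>v v = 0\<^sub>v k"
      using det_0_iff_vec_prod_zero_field[OF G] by auto
    have "G *\<^sub>v v = transpose_mat ?X *\<^sub>v (?X *\<^sub>v v)"
      unfolding G_def using v by (subst assoc_mult_mat_vec) auto
    hence "0 = (transpose_mat ?X *\<^sub>v (?X *\<^sub>v v)) \<bullet> v" using v(1) v(3) by (metis scalar_prod_left_zero)
    also have "\<dots> = (?X *\<^sub>v v) \<bullet> (?X *\<^sub>v v)"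
      by (rule transpose_vec_mult_scalar[of _ "dim_row X" k]) (use v in auto)
    finally have "?X *\<^sub>v v = 0\<^sub>v ?N" by (intro self_sp_zero[of _ ?N]) auto
    with inj v(1) have "v = 0\<^sub>v k" by blast
    with v(2) show False by simp
  qed
  hence U: "G \<in> Units (ring_mat TYPE(real) k ())" by (rule det_non_zero_imp_unit[OF G])
  obtain Gi where Gi: "mat_inverse G = Some Gi"
    using mat_inverse(1)[OF G, of "()"] U by (cases "mat_inverse G") auto
  from mat_inverse(2)[OF G Gi] have inv: "G * Gi = 1\<^sub>m k" "Gi * G = 1\<^sub>m k" "Gi \<in> carrier_mat k k" by auto
  have XT: "transpose_mat ?X \<in> carrier_mat k ?N" by simp
  have GT: "transpose_mat G = G" unfolding G_def
    using transpose_mult[OF XT Xsub_carrier] by simp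
  have TGi: "transpose_mat Gi \<in> carrier_mat k k" using inv(3) by simp
  have "transpose_mat (G * Gi) = transpose_mat Gi * transpose_mat G" by (rule transpose_mult[OF G inv(3)])
  hence T1: "transpose_mat Gi * G = 1\<^sub>m k" using inv(1) GT by simp
  have "transpose_mat Gi = transpose_mat Gi * (G * Gi)" using inv(1) TGi by simp
  also have "\<dots> = (transpose_mat Gi * G) * Gi" using assoc_mult_mat[OF TGi G inv(3)] by simp
  also have "\<dots> = Gi" using T1 inv(3) by simp
  finally show ?thesis using inv Gi by auto
qed

lemma hat_zero: "hatm X 0 = 0\<^sub>m (dim_row X) (dim_row X)" by (simp add: hatm_def)

lemma hat_facts:
  fixes X :: "real mat"
  assumes inj: "\<forall>v\<in>carrier_vec k. Xsub X k *\<^sub>v v = 0\<^sub>v (dim_row X) \<longrightarrow> v = 0\<^sub>v k" and k: "0 < k"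
  shows "\<exists>Gi. Gi \<in> carrier_mat k k \<and> hatm X k = Xsub X k * Gi * transpose_mat (Xsub X k)
      \<and> hatm X k \<in> carrier_mat (dim_row X) (dim_row X) \<and> transpose_mat (hatm X k) = hatm X k
      \<and> hatm X k * Xsub X k = Xsub X k"
proof -
  let ?X = "Xsub X k" let ?N = "dim_row X"
  obtain Gi where Gi: "Gi \<in> carrier_mat k k" "mat_inverse (transpose_mat ?X * ?X) = Some Gi"
     "Gi * (transpose_mat ?X * ?X) = 1\<^sub>m k" "transpose_mat Gi = Gi"
    using gram_inv[OF inj] by blast
  have H: "hatm X k = ?X * Gi * transpose_mat ?X" using k Gi(2) by (simp add: hatm_def)
  have X: "?X \<in> carrier_mat ?N k" by simp
  have XT: "transpose_mat ?X \<in> carrier_mat k ?N" by simp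
  have XG: "?X * Gi \<in> carrier_mat ?N k" using mult_carrier_mat[OF X Gi(1)] .
  have HC: "hatm X k \<in> carrier_mat ?N ?N" unfolding H using mult_carrier_mat[OF XG XT] .
  have "transpose_mat (hatm X k) = transpose_mat (transpose_mat ?X) * transpose_mat (?X * Gi)"
    unfolding H by (rule transpose_mult[OF XG XT])
  also have "\<dots> = ?X * (transpose_mat Gi * transpose_mat ?X)"
    using transpose_mult[OF X Gi(1)] by simp
  also have "\<dots> = ?X * Gi * transpose_mat ?X" using Gi(4) assoc_mult_mat[OF X Gi(1) XT] by simp
  finally have T: "transpose_mat (hatm X k) = hatm X k" using H by simp
  have G: "transpose_mat ?X * ?X \<in> carrier_mat k k" using mult_carrier_mat[OF XT X] .
  have "hatm X k * ?X = (?X * Gi) * (transpose_mat ?X * ?X)"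
    unfolding H using assoc_mult_mat[OF XG XT X] .
  also have "\<dots> = ?X * (Gi * (transpose_mat ?X * ?X))" using assoc_mult_mat[OF X Gi(1) G] .
  also have "\<dots> = ?X" using Gi(3) by simp
  finally show ?thesis using Gi(1) H HC T by blast
qed

lemma hat_carrier:
  fixes X :: "real mat"
  assumes inj: "\<forall>v\<in>carrier_vec k. Xsub X k *\<^sub>v v = 0\<^sub>v (dim_row X) \<longrightarrow> v = 0\<^sub>v k"
  shows "hatm X k \<in> carrier_mat (dim_row X) (dim_row X)" "transpose_mat (hatm X k) = hatm X k"
  using hat_facts[OF inj] hat_zero[of X] by (cases "k = 0"; force)+

lemma hat_nest:
  fixes X :: "real mat"
  assumes injk: "\<forall>v\<in>carrier_vec k. Xsub X k *\<^sub>v v = 0\<^sub>v (dim_row X) \<longrightarrow> v = 0\<^sub>v k"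
    and injl: "\<forall>v\<in>carrier_vec l. Xsub X l *\<^sub>v v = 0\<^sub>v (dim_row X) \<longrightarrow> v = 0\<^sub>v l"
    and kl: "k \<le> l"
  shows "hatm X l * hatm X k = hatm X k" "hatm X k * hatm X l = hatm X k"
proof -
  let ?N = "dim_row X"
  have Hl: "hatm X l \<in> carrier_mat ?N ?N" "transpose_mat (hatm X l) = hatm X l" using hat_carrier[OF injl] by auto
  have Hk: "hatm X k \<in> carrier_mat ?N ?N" "transpose_mat (hatm X k) = hatm X k" using hat_carrier[OF injk] by auto
  have 1: "hatm X l * hatm X k = hatm X k"
  proof (cases "k = 0")
    case True thus ?thesis using Hl by (simp add: hat_zero)
  next
    case False
    then obtain Gi where Gi: "Gi \<in> carrier_mat k k" "hatm X k = Xsub X k * Gi * transpose_mat (Xsub X k)"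
      using hat_facts[OF injk] by blast
    have "0 < l" using False kl by simp
    then have HX: "hatm X l * Xsub X l = Xsub X l" using hat_facts[OF injl] by blast
    have Xl: "Xsub X l \<in> carrier_mat ?N l" by simp
    have Xk: "Xsub X k \<in> carrier_mat ?N k" by simp
    have XT: "transpose_mat (Xsub X k) \<in> carrier_mat k ?N" by simp
    have "hatm X l * Xsub X k = hatm X l * (Xsub X l * Sel l k)" using Xsub_nest[OF kl] by simp
    also have "\<dots> = (hatm X l * Xsub X l) * Sel l k" using assoc_mult_mat[OF Hl(1) Xl Sel_carrier] by simp
    also have "\<dots> = Xsub X k" using HX Xsub_nest[OF kl] by simp
    finally have HXk: "hatm X l * Xsub X k = Xsub X k" .
    have XG: "Xsub X k * Gi \<in> carrier_mat ?N k" using mult_carrier_mat[OF Xk Gi(1)] .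
    have "hatm X l * hatm X k = hatm X l * (Xsub X k * Gi * transpose_mat (Xsub X k))" using Gi by simp
    also have "\<dots> = (hatm X l * (Xsub X k * Gi)) * transpose_mat (Xsub X k)"
      using assoc_mult_mat[OF Hl(1) XG XT] by simp
    also have "hatm X l * (Xsub X k * Gi) = (hatm X l * Xsub X k) * Gi"
      using assoc_mult_mat[OF Hl(1) Xk Gi(1)] by simp
    finally show ?thesis using HXk Gi(2) by simp
  qed
  show "hatm X l * hatm X k = hatm X k" by (rule 1)
  have "transpose_mat (hatm X l * hatm X k) = transpose_mat (hatm X k) * transpose_mat (hatm X l)"
    by (rule transpose_mult[OF Hl(1) Hk(1)])
  thus "hatm X k * hatm X l = hatm X k" using 1 Hl Hk by simp
qed

lemma zero_mat_mult_vec: "dim_vec (v :: real vec) = M \<Longrightarrow> 0\<^sub>m N M *\<^sub>v v = 0\<^sub>v N"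
  by (intro eq_vecI) (auto simp: scalar_prod_def)

lemma hat_strict:
  fixes X :: "real mat"
  assumes injk: "\<forall>v\<in>carrier_vec k. Xsub X k *\<^sub>v v = 0\<^sub>v (dim_row X) \<longrightarrow> v = 0\<^sub>v k"
    and injl: "\<forall>v\<in>carrier_vec l. Xsub X l *\<^sub>v v = 0\<^sub>v (dim_row X) \<longrightarrow> v = 0\<^sub>v l"
    and kl: "k < l"
  shows "hatm X l \<noteq> hatm X k"
proof
  assume eq: "hatm X l = hatm X k"
  let ?N = "dim_row X"
  define e :: "real vec" where "e = unit_vec l (l - 1)"
  have e: "e \<in> carrier_vec l" "e $ (l - 1) = 1" "e \<noteq> 0\<^sub>v l" using kl by (auto simp: e_def)
  define x where "x = Xsub X l *\<^sub>v e"
  have Xl: "Xsub X l \<in> carrier_mat ?N l" by simp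
  have Hl: "hatm X l \<in> carrier_mat ?N ?N" using hat_carrier[OF injl] by auto
  have HX: "hatm X l * Xsub X l = Xsub X l" using hat_facts[OF injl] kl by auto
  have "hatm X l *\<^sub>v x = (hatm X l * Xsub X l) *\<^sub>v e" unfolding x_def
    using assoc_mult_mat_vec[OF Hl Xl e(1)] by simp
  hence Hx: "hatm X k *\<^sub>v x = x" using HX eq x_def by simp
  show False
  proof (cases "k = 0")
    case True
    hence "x = 0\<^sub>v ?N" using Hx by (simp add: hat_zero x_def zero_mat_mult_vec)
    thus False using injl e by (auto simp: x_def)
  next
    case False
    then obtain Gi where Gi: "Gi \<in> carrier_mat k k" "hatm X k = Xsub X k * Gi * transpose_mat (Xsub X k)"
      using hat_facts[OF injk] by blast
    have Xk: "Xsub X k \<in> carrier_mat ?N k" by simp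
    have XT: "transpose_mat (Xsub X k) \<in> carrier_mat k ?N" by simp
    have xc: "x \<in> carrier_vec ?N" by (simp add: x_def)
    define c where "c = Gi *\<^sub>v (transpose_mat (Xsub X k) *\<^sub>v x)"
    have cc: "c \<in> carrier_vec k" unfolding c_def using Gi(1) by (intro carrier_vecI) auto
    have XG: "Xsub X k * Gi \<in> carrier_mat ?N k" using mult_carrier_mat[OF Xk Gi(1)] .
    have tx: "transpose_mat (Xsub X k) *\<^sub>v x \<in> carrier_vec k" by (intro carrier_vecI) simp
    have "x = (Xsub X k * Gi * transpose_mat (Xsub X k)) *\<^sub>v x" using Hx Gi by simp
    also have "\<dots> = (Xsub X k * Gi) *\<^sub>v (transpose_mat (Xsub X k) *\<^sub>v x)"
      using assoc_mult_mat_vec[OF XG XT xc] .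
    also have "\<dots> = Xsub X k *\<^sub>v c" unfolding c_def using assoc_mult_mat_vec[OF Xk Gi(1) tx] .
    also have "\<dots> = (Xsub X l * Sel l k) *\<^sub>v c" using Xsub_nest[of k l X] kl by simp
    also have "\<dots> = Xsub X l *\<^sub>v (Sel l k *\<^sub>v c)" using assoc_mult_mat_vec[OF Xl Sel_carrier cc] .
    finally have x2: "x = Xsub X l *\<^sub>v (Sel l k *\<^sub>v c)" .
    have sc: "Sel l k *\<^sub>v c \<in> carrier_vec l" by (intro carrier_vecI) (simp add: Sel_def)
    have "Xsub X l *\<^sub>v (e - Sel l k *\<^sub>v c) = Xsub X l *\<^sub>v e - Xsub X l *\<^sub>v (Sel l k *\<^sub>v c)"
      using mult_minus_distrib_mat_vec[OF Xl e(1) sc] .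
    also have "\<dots> = 0\<^sub>v ?N" using x2 x_def by simp
    finally have X0: "Xsub X l *\<^sub>v (e - Sel l k *\<^sub>v c) = 0\<^sub>v ?N" .
    have ec: "e - Sel l k *\<^sub>v c \<in> carrier_vec l" using e(1) sc by (rule minus_carrier_vec)
    have "e - Sel l k *\<^sub>v c = 0\<^sub>v l" using bspec[OF injl ec] X0 by simp
    hence z: "(e - Sel l k *\<^sub>v c) $ (l - 1) = 0" using kl by simp
    have l1: "l - 1 < l" using kl by simp
    have "(Sel l k *\<^sub>v c) $ (l - 1) = row (Sel l k) (l - 1) \<bullet> c"
      using l1 by (simp add: Sel_def)
    also have "\<dots> = (\<Sum>t\<in>{0..<k}. row (Sel l k) (l - 1) $ t * c $ t)"
      using cc by (simp add: scalar_prod_def)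
    also have "\<dots> = 0"
    proof (intro sum.neutral ballI)
      fix t assume "t \<in> {0..<k}"
      hence "t < k" "t \<noteq> l - 1" using kl by auto
      thus "row (Sel l k) (l - 1) $ t * c $ t = 0" using l1 by (simp add: Sel_def)
    qed
    finally have s0: "(Sel l k *\<^sub>v c) $ (l - 1) = 0" .
    have "(e - Sel l k *\<^sub>v c) $ (l - 1) = e $ (l - 1) - (Sel l k *\<^sub>v c) $ (l - 1)"
      using l1 sc by (intro index_minus_vec(1)) (simp_all add: Sel_def)
    thus False using z s0 e(2) by simp
  qed
qed

lemma sq_sum_expand:
  fixes U :: real and x :: "nat \<Rightarrow> real"
  shows "(U + (\<Sum>k<n. x k))^2 = U^2 + (\<Sum>k<n. 2 * U * x k) + (\<Sum>k<n. \<Sum>l<n. x k * x l)"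
proof -
  have "(\<Sum>k<n. x k)^2 = (\<Sum>k<n. \<Sum>l<n. x k * x l)"
    by (simp add: power2_eq_square sum_product)
  moreover have "(\<Sum>k<n. 2 * U * x k) = 2 * U * (\<Sum>k<n. x k)" by (simp add: sum_distrib_left)
  ultimately show ?thesis by (simp add: power2_eq_square algebra_simps)
qed

lemma risk_expand:
  fixes Pr :: "'a measure" and e :: "'a \<Rightarrow> nat \<Rightarrow> real" and A :: "nat \<Rightarrow> nat \<Rightarrow> real"
    and mu :: "nat \<Rightarrow> real" and Om :: "nat \<Rightarrow> nat \<Rightarrow> real"
  assumes prob: "prob_space Pr"
    and int1: "\<forall>k<n. integrable Pr (\<lambda>\<omega>. e \<omega> k)"
    and int2: "\<forall>k<n. \<forall>l<n. integrable Pr (\<lambda>\<omega>. e \<omega> k * e \<omega> l)"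
    and mean: "\<forall>k<n. (\<integral>\<omega>. e \<omega> k \<partial>Pr) = 0"
    and cov: "\<forall>k<n. \<forall>l<n. Om k l = (\<integral>\<omega>. e \<omega> k * e \<omega> l \<partial>Pr)"
  shows "(\<integral>\<omega>. (\<Sum>i<n. ((\<Sum>k<n. A i k * (mu k + e \<omega> k)) - mu i)^2) \<partial>Pr)
     = (\<Sum>i<n. ((\<Sum>k<n. A i k * mu k) - mu i)^2) + (\<Sum>i<n. \<Sum>k<n. \<Sum>l<n. A i k * A i l * Om k l)"
proof -
  define U where "U i = (\<Sum>k<n. A i k * mu k) - mu i" for i
  define g1 where "g1 \<omega> = (\<Sum>i<n. \<Sum>k<n. (2 * U i * A i k) * e \<omega> k)" for \<omega>
  define g2 where "g2 \<omega> = (\<Sum>i<n. \<Sum>k<n. \<Sum>l<n. (A i k * A i l) * (e \<omega> k * e \<omega> l))" for \<omega>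
  have pt: "(\<Sum>i<n. ((\<Sum>k<n. A i k * (mu k + e \<omega> k)) - mu i)^2) = (\<Sum>i<n. U i ^2) + g1 \<omega> + g2 \<omega>" for \<omega>
  proof -
    have "((\<Sum>k<n. A i k * (mu k + e \<omega> k)) - mu i)^2
       = U i ^ 2 + (\<Sum>k<n. (2 * U i * A i k) * e \<omega> k) + (\<Sum>k<n. \<Sum>l<n. (A i k * A i l) * (e \<omega> k * e \<omega> l))" for i
    proof -
      have "(\<Sum>k<n. A i k * (mu k + e \<omega> k)) - mu i = U i + (\<Sum>k<n. A i k * e \<omega> k)"
        unfolding U_def by (simp add: distrib_left sum.distrib)
      hence "((\<Sum>k<n. A i k * (mu k + e \<omega> k)) - mu i)^2 = (U i + (\<Sum>k<n. A i k * e \<omega> k))^2" by simp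
      also have "\<dots> = U i ^ 2 + (\<Sum>k<n. 2 * U i * (A i k * e \<omega> k)) + (\<Sum>k<n. \<Sum>l<n. (A i k * e \<omega> k) * (A i l * e \<omega> l))"
        by (rule sq_sum_expand)
      finally show ?thesis by (simp add: ac_simps)
    qed
    thus ?thesis unfolding g1_def g2_def by (simp add: sum.distrib)
  qed
  interpret prob_space Pr by (rule prob)
  have i1: "integrable Pr g1" unfolding g1_def by (intro Bochner_Integration.integrable_sum integrable_mult_right) (use int1 in auto)
  have i2: "integrable Pr g2" unfolding g2_def by (intro Bochner_Integration.integrable_sum integrable_mult_right) (use int2 in auto)
  have I1: "integral\<^sup>L Pr g1 = 0" unfolding g1_def
  proof -
    have "(\<integral>\<omega>. (\<Sum>i<n. \<Sum>k<n. (2 * U i * A i k) * e \<omega> k) \<partial>Pr) = (\<Sum>i<n. (\<integral>\<omega>. (\<Sum>k<n. (2 * U i * A i k) * e \<omega> k) \<partial>Pr))"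
      by (rule Bochner_Integration.integral_sum) (intro Bochner_Integration.integrable_sum integrable_mult_right, use int1 in auto)
    also have "\<dots> = (\<Sum>i<n. \<Sum>k<n. (\<integral>\<omega>. (2 * U i * A i k) * e \<omega> k \<partial>Pr))"
      by (intro sum.cong refl Bochner_Integration.integral_sum) (intro integrable_mult_right, use int1 in auto)
    also have "\<dots> = 0" using mean by simp
    finally show "(\<integral>\<omega>. (\<Sum>i<n. \<Sum>k<n. (2 * U i * A i k) * e \<omega> k) \<partial>Pr) = 0" .
  qed
  have I2: "integral\<^sup>L Pr g2 = (\<Sum>i<n. \<Sum>k<n. \<Sum>l<n. A i k * A i l * Om k l)" unfolding g2_def
  proof -
    have "(\<integral>\<omega>. (\<Sum>i<n. \<Sum>k<n. \<Sum>l<n. (A i k * A i l) * (e \<omega> k * e \<omega> l)) \<partial>Pr)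
        = (\<Sum>i<n. (\<integral>\<omega>. (\<Sum>k<n. \<Sum>l<n. (A i k * A i l) * (e \<omega> k * e \<omega> l)) \<partial>Pr))"
      by (rule Bochner_Integration.integral_sum) (intro Bochner_Integration.integrable_sum integrable_mult_right, use int2 in auto)
    also have "\<dots> = (\<Sum>i<n. \<Sum>k<n. (\<integral>\<omega>. (\<Sum>l<n. (A i k * A i l) * (e \<omega> k * e \<omega> l)) \<partial>Pr))"
      by (intro sum.cong refl Bochner_Integration.integral_sum) (intro Bochner_Integration.integrable_sum integrable_mult_right, use int2 in auto)
    also have "\<dots> = (\<Sum>i<n. \<Sum>k<n. \<Sum>l<n. (\<integral>\<omega>. (A i k * A i l) * (e \<omega> k * e \<omega> l) \<partial>Pr))"
      by (intro sum.cong refl Bochner_Integration.integral_sum) (intro integrable_mult_right, use int2 in auto)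
    also have "\<dots> = (\<Sum>i<n. \<Sum>k<n. \<Sum>l<n. A i k * A i l * Om k l)" using cov by simp
    finally show "(\<integral>\<omega>. (\<Sum>i<n. \<Sum>k<n. \<Sum>l<n. (A i k * A i l) * (e \<omega> k * e \<omega> l)) \<partial>Pr) = (\<Sum>i<n. \<Sum>k<n. \<Sum>l<n. A i k * A i l * Om k l)" .
  qed
  have "(\<integral>\<omega>. (\<Sum>i<n. ((\<Sum>k<n. A i k * (mu k + e \<omega> k)) - mu i)^2) \<partial>Pr)
      = (\<integral>\<omega>. (\<Sum>i<n. U i ^2) + g1 \<omega> + g2 \<omega> \<partial>Pr)" by (simp add: pt)
  also have "\<dots> = (\<Sum>i<n. U i ^2) + integral\<^sup>L Pr g1 + integral\<^sup>L Pr g2"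
    using i1 i2 by (simp add: prob_space)
  finally show ?thesis using I1 I2 U_def by simp
qed

lemma tele_sum: "(f :: nat \<Rightarrow> real) 0 = 0 \<Longrightarrow> f k = (\<Sum>j\<in>{1..k}. f j - f (j - 1))"
  by (induction k) (auto simp: sum.cl_ivl_Suc)

lemma sum_ge_filter:
  fixes w :: "nat \<Rightarrow> real"
  assumes "1 \<le> j"
  shows "(\<Sum>m\<in>{1..M}. if j \<le> m then w m else 0) = (\<Sum>m\<in>{j..M}. w m)"
proof -
  have "{m\<in>{1..M}. j \<le> m} = {j..M}" using assms by auto
  thus ?thesis by (simp add: sum.inter_filter[symmetric])
qed

lemma min_tele:
  fixes f :: "nat \<Rightarrow> real"
  assumes "f 0 = 0" "m \<le> M" "m' \<le> M"
  shows "f (min m m') = (\<Sum>j\<in>{1..M}. if j \<le> m \<and> j \<le> m' then f j - f (j - 1) else 0)"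
proof -
  have "{j\<in>{1..M}. j \<le> m \<and> j \<le> m'} = {1..min m m'}" using assms by auto
  hence "(\<Sum>j\<in>{1..M}. if j \<le> m \<and> j \<le> m' then f j - f (j - 1) else 0) = (\<Sum>j\<in>{1..min m m'}. f j - f (j - 1))"
    by (simp add: sum.inter_filter[symmetric])
  thus ?thesis using tele_sum[of f "min m m'", OF assms(1)] by simp
qed

lemma sum_prod_helper:
  fixes a b :: "nat \<Rightarrow> real"
  shows "(\<Sum>m\<in>A. \<Sum>m'\<in>A. d * (a m * b m')) = d * ((\<Sum>m\<in>A. a m) * (\<Sum>m'\<in>A. b m'))"
  by (subst sum_product) (simp add: sum_distrib_left)

lemma abel2:
  fixes f w :: "nat \<Rightarrow> real"
  assumes f0: "f 0 = 0"
  shows "(\<Sum>m\<in>{1..M}. \<Sum>m'\<in>{1..M}. w m * w m' * f (min m m'))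
       = (\<Sum>j\<in>{1..M}. (f j - f (j - 1)) * (\<Sum>m\<in>{j..M}. w m)^2)"
proof -
  let ?d = "\<lambda>j. f j - f (j - 1)"
  have "(\<Sum>m\<in>{1..M}. \<Sum>m'\<in>{1..M}. w m * w m' * f (min m m'))
      = (\<Sum>m\<in>{1..M}. \<Sum>m'\<in>{1..M}. \<Sum>j\<in>{1..M}. ?d j * ((if j \<le> m then w m else 0) * (if j \<le> m' then w m' else 0)))"
  proof (intro sum.cong refl)
    fix m m' assume that: "m \<in> {1..M}" "m' \<in> {1..M}"
    have eq: "f (min m m') = (\<Sum>j\<in>{1..M}. if j \<le> m \<and> j \<le> m' then ?d j else 0)"
      using min_tele[of f m M m'] f0 that by simp
    show "w m * w m' * f (min m m') = (\<Sum>j\<in>{1..M}. ?d j * ((if j \<le> m then w m else 0) * (if j \<le> m' then w m' else 0)))"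
      unfolding eq sum_distrib_left by (intro sum.cong refl) auto
  qed
  also have "\<dots> = (\<Sum>m\<in>{1..M}. \<Sum>j\<in>{1..M}. \<Sum>m'\<in>{1..M}. ?d j * ((if j \<le> m then w m else 0) * (if j \<le> m' then w m' else 0)))"
    by (rule sum.cong[OF refl], rule sum.swap)
  also have "\<dots> = (\<Sum>j\<in>{1..M}. \<Sum>m\<in>{1..M}. \<Sum>m'\<in>{1..M}. ?d j * ((if j \<le> m then w m else 0) * (if j \<le> m' then w m' else 0)))"
    by (rule sum.swap)
  also have "\<dots> = (\<Sum>j\<in>{1..M}. ?d j * ((\<Sum>m\<in>{1..M}. if j \<le> m then w m else 0) * (\<Sum>m'\<in>{1..M}. if j \<le> m' then w m' else 0)))"
    by (rule sum.cong[OF refl], rule sum_prod_helper)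
  also have "\<dots> = (\<Sum>j\<in>{1..M}. ?d j * (\<Sum>m\<in>{j..M}. w m)^2)"
  proof (rule sum.cong[OF refl])
    fix j assume "j \<in> {1..M}"
    thus "?d j * ((\<Sum>m\<in>{1..M}. if j \<le> m then w m else 0) * (\<Sum>m'\<in>{1..M}. if j \<le> m' then w m' else 0)) = ?d j * (\<Sum>m\<in>{j..M}. w m)^2"
      using sum_ge_filter[of j w M] by (simp add: power2_eq_square)
  qed
  finally show ?thesis .
qed

lemma abel1:
  fixes f w :: "nat \<Rightarrow> real"
  assumes f0: "f 0 = 0"
  shows "(\<Sum>m\<in>{1..M}. w m * f m) = (\<Sum>j\<in>{1..M}. (f j - f (j - 1)) * (\<Sum>m\<in>{j..M}. w m))"
proof -
  let ?d = "\<lambda>j. f j - f (j - 1)"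
  have "(\<Sum>m\<in>{1..M}. w m * f m) = (\<Sum>m\<in>{1..M}. \<Sum>j\<in>{1..M}. ?d j * (if j \<le> m then w m else 0))"
  proof (intro sum.cong refl)
    fix m assume that: "m \<in> {1..M}"
    have eq: "f m = (\<Sum>j\<in>{1..M}. if j \<le> m \<and> j \<le> m then ?d j else 0)"
      using min_tele[of f m M m] f0 that by simp
    show "w m * f m = (\<Sum>j\<in>{1..M}. ?d j * (if j \<le> m then w m else 0))"
      unfolding eq sum_distrib_left by (intro sum.cong refl) auto
  qed
  also have "\<dots> = (\<Sum>j\<in>{1..M}. \<Sum>m\<in>{1..M}. ?d j * (if j \<le> m then w m else 0))"
    by (rule sum.swap)
  also have "\<dots> = (\<Sum>j\<in>{1..M}. ?d j * (\<Sum>m\<in>{1..M}. if j \<le> m then w m else 0))"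
    by (simp add: sum_distrib_left)
  also have "\<dots> = (\<Sum>j\<in>{1..M}. ?d j * (\<Sum>m\<in>{j..M}. w m))"
  proof (rule sum.cong[OF refl])
    fix j assume "j \<in> {1..M}"
    thus "?d j * (\<Sum>m\<in>{1..M}. if j \<le> m then w m else 0) = ?d j * (\<Sum>m\<in>{j..M}. w m)"
      using sum_ge_filter[of j w M] by simp
  qed
  finally show ?thesis .
qed

lemma quad_bound:
  fixes a b g :: real
  assumes "0 \<le> a" "0 < b"
  shows "a * b / (a + b) \<le> a * (1 - g)^2 + b * g^2"
    "a * (1 - a / (a + b))^2 + b * (a / (a + b))^2 = a * b / (a + b)"
proof -
  have ab: "a + b > 0" using assms by simp
  have "(a + b) * (a * (1 - g)^2 + b * g^2) - a * b = ((a + b) * g - a)^2"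
    by (simp add: power2_eq_square algebra_simps)
  hence "a * b \<le> (a + b) * (a * (1 - g)^2 + b * g^2)" by (smt (verit) zero_le_power2)
  thus "a * b / (a + b) \<le> a * (1 - g)^2 + b * g^2" using ab by (simp add: divide_le_eq mult.commute)
  have 1: "1 - a / (a + b) = b / (a + b)" using ab by (simp add: field_simps)
  have "a * (b / (a + b))^2 + b * (a / (a + b))^2 = (a * b) * (a + b) / ((a + b) * (a + b))"
    by (simp add: power2_eq_square divide_simps) (simp add: algebra_simps)
  also have "\<dots> = a * b / (a + b)" using ab by simp
  finally show "a * (1 - a / (a + b))^2 + b * (a / (a + b))^2 = a * b / (a + b)" using 1 by simp
qed

lemma move1: "(\<Sum>l\<in>L. \<Sum>m\<in>M. \<Sum>m'\<in>N. (g l m m' :: real)) = (\<Sum>m\<in>M. \<Sum>m'\<in>N. \<Sum>l\<in>L. g l m m')"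
proof -
  have "(\<Sum>l\<in>L. \<Sum>m\<in>M. \<Sum>m'\<in>N. g l m m') = (\<Sum>m\<in>M. \<Sum>l\<in>L. \<Sum>m'\<in>N. g l m m')" by (rule sum.swap)
  also have "\<dots> = (\<Sum>m\<in>M. \<Sum>m'\<in>N. \<Sum>l\<in>L. g l m m')" by (rule sum.cong[OF refl], rule sum.swap)
  finally show ?thesis .
qed

lemma swap5: "(\<Sum>i\<in>I. \<Sum>k\<in>K. \<Sum>l\<in>L. \<Sum>m\<in>M. \<Sum>m'\<in>N. (G i k l m m' :: real))
   = (\<Sum>m\<in>M. \<Sum>m'\<in>N. \<Sum>i\<in>I. \<Sum>k\<in>K. \<Sum>l\<in>L. G i k l m m')"
proof -
  have "(\<Sum>i\<in>I. \<Sum>k\<in>K. \<Sum>l\<in>L. \<Sum>m\<in>M. \<Sum>m'\<in>N. G i k l m m') = (\<Sum>i\<in>I. \<Sum>k\<in>K. \<Sum>m\<in>M. \<Sum>m'\<in>N. \<Sum>l\<in>L. G i k l m m')"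
    by (rule sum.cong[OF refl], rule sum.cong[OF refl], rule move1)
  also have "\<dots> = (\<Sum>i\<in>I. \<Sum>m\<in>M. \<Sum>m'\<in>N. \<Sum>k\<in>K. \<Sum>l\<in>L. G i k l m m')"
    by (rule sum.cong[OF refl], rule move1)
  also have "\<dots> = (\<Sum>m\<in>M. \<Sum>m'\<in>N. \<Sum>i\<in>I. \<Sum>k\<in>K. \<Sum>l\<in>L. G i k l m m')"
    by (rule move1)
  finally show ?thesis .
qed

lemma swap3: "(\<Sum>i\<in>I. \<Sum>k\<in>K. \<Sum>l\<in>L. (G i k l :: real)) = (\<Sum>k\<in>K. \<Sum>l\<in>L. \<Sum>i\<in>I. G i k l)"
  by (rule move1)

lemma bilin3:
  fixes w :: "nat \<Rightarrow> real" and p :: "nat \<Rightarrow> nat \<Rightarrow> nat \<Rightarrow> real"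
  shows "(\<Sum>i\<in>I. \<Sum>k\<in>K. \<Sum>l\<in>L. (\<Sum>m\<in>M. w m * p m i k) * (\<Sum>m'\<in>M. w m' * p m' i l) * c k l)
   = (\<Sum>m\<in>M. \<Sum>m'\<in>M. w m * w m' * (\<Sum>i\<in>I. \<Sum>k\<in>K. \<Sum>l\<in>L. p m i k * p m' i l * c k l))"
proof -
  have e: "(\<Sum>m\<in>M. w m * p m i k) * (\<Sum>m'\<in>M. w m' * p m' i l) * c k l
      = (\<Sum>m\<in>M. \<Sum>m'\<in>M. w m * w m' * (p m i k * p m' i l * c k l))" for i k l
    unfolding sum_product sum_distrib_right by (intro sum.cong refl) (simp add: sum_distrib_left mult_ac)
  have "(\<Sum>m\<in>M. \<Sum>m'\<in>M. w m * w m' * (\<Sum>i\<in>I. \<Sum>k\<in>K. \<Sum>l\<in>L. p m i k * p m' i l * c k l))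
     = (\<Sum>m\<in>M. \<Sum>m'\<in>M. \<Sum>i\<in>I. \<Sum>k\<in>K. \<Sum>l\<in>L. w m * w m' * (p m i k * p m' i l * c k l))"
    by (simp add: sum_distrib_left)
  also have "\<dots> = (\<Sum>i\<in>I. \<Sum>k\<in>K. \<Sum>l\<in>L. \<Sum>m\<in>M. \<Sum>m'\<in>M. w m * w m' * (p m i k * p m' i l * c k l))"
    by (rule swap5[symmetric])
  finally show ?thesis by (simp add: e)
qed

lemma bilin1:
  fixes w :: "nat \<Rightarrow> real" and v :: "nat \<Rightarrow> nat \<Rightarrow> real"
  shows "(\<Sum>i\<in>I. (\<Sum>m\<in>M. w m * v m i) * (\<Sum>m'\<in>M. w m' * v m' i))
   = (\<Sum>m\<in>M. \<Sum>m'\<in>M. w m * w m' * (\<Sum>i\<in>I. v m i * v m' i))"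
proof -
  have "(\<Sum>i\<in>I. (\<Sum>m\<in>M. w m * v m i) * (\<Sum>m'\<in>M. w m' * v m' i))
      = (\<Sum>i\<in>I. \<Sum>m\<in>M. \<Sum>m'\<in>M. w m * w m' * (v m i * v m' i))"
    by (simp add: sum_product mult_ac)
  also have "\<dots> = (\<Sum>m\<in>M. \<Sum>m'\<in>M. \<Sum>i\<in>I. w m * w m' * (v m i * v m' i))" by (rule move1)
  finally show ?thesis by (simp add: sum_distrib_left)
qed

lemma sp_mat_sum:
  fixes A :: "real mat"
  assumes "A \<in> carrier_mat n n" "u \<in> carrier_vec n" "v \<in> carrier_vec n"
  shows "u \<bullet> (A *\<^sub>v v) = (\<Sum>i<n. \<Sum>k<n. u $ i * A $$ (i,k) * v $ k)"
  using assms by (simp add: scalar_prod_def atLeast0LessThan sum_distrib_left mult.assoc)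

lemma trace_sum:
  fixes A B :: "real mat"
  assumes "A \<in> carrier_mat n n" "B \<in> carrier_mat n n"
  shows "mtrace (A * B) = (\<Sum>i<n. \<Sum>k<n. A $$ (i,k) * B $$ (k,i))"
  using assms by (simp add: mtrace_def scalar_prod_def atLeast0LessThan)

lemma dd_sum:
  fixes A :: "real mat"
  assumes "A \<in> carrier_mat n n" "y \<in> carrier_vec n" "mu \<in> carrier_vec n"
  shows "(let d = A *\<^sub>v y - mu in d \<bullet> d) = (\<Sum>i<n. ((\<Sum>k<n. A $$ (i,k) * y $ k) - mu $ i)^2)"
  using assms by (simp add: Let_def scalar_prod_def atLeast0LessThan power2_eq_square)

lemma tele2:
  fixes g :: "nat \<Rightarrow> real"
  assumes "j \<le> M"
  shows "(\<Sum>m\<in>{j..M}. if m < M then g m - g (Suc m) else g M) = g j"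
proof -
  have "\<forall>j. M - j = d \<longrightarrow> j \<le> M \<longrightarrow> (\<Sum>m\<in>{j..M}. if m < M then g m - g (Suc m) else g M) = g j" for d
  proof (induction d)
    case 0 thus ?case by auto
  next
    case (Suc d)
    show ?case
    proof (intro allI impI)
      fix j assume j: "M - j = Suc d" "j \<le> M"
      hence jM: "j < M" by simp
      have "(\<Sum>m\<in>{j..M}. if m < M then g m - g (Suc m) else g M)
          = (g j - g (Suc j)) + (\<Sum>m\<in>{Suc j..M}. if m < M then g m - g (Suc m) else g M)"
        using jM by (simp add: sum.atLeast_Suc_atMost)
      also have "(\<Sum>m\<in>{Suc j..M}. if m < M then g m - g (Suc m) else g M) = g (Suc j)"
        using Suc.IH j by auto
      finally show "(\<Sum>m\<in>{j..M}. if m < M then g m - g (Suc m) else g M) = g j" by simp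
    qed
  qed
  thus ?thesis using assms by blast
qed

theorem mainTheorem13:
  fixes Pr :: "'a measure" and \<epsilon> :: "'a \<Rightarrow> real vec"
    and n p Mn :: nat and \<nu> :: "nat \<Rightarrow> nat"
    and X :: "real mat" and \<mu> :: "real vec" and \<Omega> :: "real mat"
  assumes prob: "prob_space Pr"
    and eps_dim: "\<forall>\<omega>\<in>space Pr. \<epsilon> \<omega> \<in> carrier_vec n"
    and eps_int: "\<forall>i<n. integrable Pr (\<lambda>\<omega>. \<epsilon> \<omega> $ i)"
    and eps_int2: "\<forall>i<n. \<forall>j<n. integrable Pr (\<lambda>\<omega>. \<epsilon> \<omega> $ i * \<epsilon> \<omega> $ j)"
    and eps_mean: "\<forall>i<n. (\<integral>\<omega>. \<epsilon> \<omega> $ i \<partial>Pr) = 0"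
    and Omega_dim: "\<Omega> \<in> carrier_mat n n"
    and Omega_cov: "\<forall>i<n. \<forall>j<n. \<Omega> $$ (i,j) = (\<integral>\<omega>. \<epsilon> \<omega> $ i * \<epsilon> \<omega> $ j \<partial>Pr)"
    and Omega_pd: "\<forall>v\<in>carrier_vec n. v \<noteq> 0\<^sub>v n \<longrightarrow> v \<bullet> (\<Omega> *\<^sub>v v) > 0"
    and mu_dim: "\<mu> \<in> carrier_vec n"
    and X_dim: "X \<in> carrier_mat n p"
    and Mn2: "Mn \<ge> 2"
    and nu0: "\<nu> 0 = 0"
    and nu_mono: "\<forall>m<Mn. \<nu> m < \<nu> (Suc m)"
    and nu_le: "\<nu> Mn \<le> p"
    and full_rank: "\<forall>m\<in>{1..Mn}. \<forall>v\<in>carrier_vec (\<nu> m).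
                      Xsub X (\<nu> m) *\<^sub>v v = 0\<^sub>v n \<longrightarrow> v = 0\<^sub>v (\<nu> m)"
    and theta_mono: "\<forall>m\<in>{1..<Mn}.
        acoef X \<nu> \<mu> (Suc m) / (real n * bcoef X \<nu> \<Omega> (Suc m))
          \<le> acoef X \<nu> \<mu> m / (real n * bcoef X \<nu> \<Omega> m)"
  shows
    "let a = acoef X \<nu> \<mu>; b = bcoef X \<nu> \<Omega>; R = risk Pr \<epsilon> X \<nu> Mn \<mu>;
         tr1 = mtrace (Pm X \<nu> 1 * \<Omega>);
         res = \<mu> \<bullet> ((1\<^sub>m n - Pm X \<nu> Mn) *\<^sub>v \<mu>);
         minW = tr1 + (\<Sum>m=2..Mn. a m * b m / (a m + b m)) + res;
         minQ = (\<Sum>m=1..Mn. a m * b m / (a m + b m)) + res;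
         \<gamma> = (\<lambda>m. if m = 1 then 1 else a m / (a m + b m));
         wstar = (\<lambda>m. if m < Mn then \<gamma> m - \<gamma> (Suc m) else \<gamma> Mn)
     in wstar \<in> Wset Mn \<and> R wstar = minW \<and> (\<forall>w\<in>Wset Mn. minW \<le> R w)
        \<and> (\<exists>w\<in>Qset Mn. R w = minQ) \<and> (\<forall>w\<in>Qset Mn. minQ \<le> R w)
        \<and> minW - minQ = tr1 ^ 2 / (\<mu> \<bullet> (Pm X \<nu> 1 *\<^sub>v \<mu>) + tr1)
        \<and> minW - minQ \<le> tr1"
proof -
  have Xr: "dim_row X = n" using X_dim by simp
  have nu_strict: "\<nu> i < \<nu> j" if "i < j" "j \<le> Mn" for i j
  proof -
    have "\<forall>i. i + Suc d \<le> Mn \<longrightarrow> \<nu> i < \<nu> (i + Suc d)" for d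
    proof (induction d)
      case 0 thus ?case using nu_mono by auto
    next
      case (Suc d)
      show ?case
      proof (intro allI impI)
        fix i assume "i + Suc (Suc d) \<le> Mn"
        hence "\<nu> i < \<nu> (i + Suc d)" "\<nu> (i + Suc d) < \<nu> (Suc (i + Suc d))" using Suc.IH nu_mono by auto
        thus "\<nu> i < \<nu> (i + Suc (Suc d))" by simp
      qed
    qed
    hence "i + Suc (j - i - 1) \<le> Mn \<longrightarrow> \<nu> i < \<nu> (i + Suc (j - i - 1))" by blast
    moreover have "i + Suc (j - i - 1) = j" using that by simp
    ultimately show ?thesis using that by simp
  qed
  have nu_le: "\<nu> i \<le> \<nu> j" if "i \<le> j" "j \<le> Mn" for i j
    using nu_strict[of i j] that by (cases "i = j") auto
  have inj: "\<forall>v\<in>carrier_vec (\<nu> m). Xsub X (\<nu> m) *\<^sub>v v = 0\<^sub>v (dim_row X) \<longrightarrow> v = 0\<^sub>v (\<nu> m)"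
    if "m \<le> Mn" for m
  proof (cases "m = 0")
    case True
    show ?thesis
    proof (intro ballI impI)
      fix v :: "real vec" assume "v \<in> carrier_vec (\<nu> m)"
      thus "v = 0\<^sub>v (\<nu> m)" using True nu0 by (intro eq_vecI) auto
    qed
  next
    case False thus ?thesis using full_rank that Xr by auto
  qed
  have n_pos: "0 < n"
  proof (rule ccontr)
    assume "\<not> 0 < n" hence n0: "n = 0" by simp
    have nu1: "0 < \<nu> 1" using nu_strict[of 0 1] nu0 Mn2 by simp
    define e :: "real vec" where "e = unit_vec (\<nu> 1) 0"
    have ec: "e \<in> carrier_vec (\<nu> 1)" by (simp add: e_def)
    have "Xsub X (\<nu> 1) *\<^sub>v e = 0\<^sub>v (dim_row X)" using n0 Xr by (intro eq_vecI) auto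
    hence "e = 0\<^sub>v (\<nu> 1)" using bspec[OF inj[of 1] ec] Mn2 by simp
    moreover have "e $ 0 = 1" using nu1 by (simp add: e_def)
    ultimately show False using nu1 by simp
  qed
  define P where "P m = Pm X \<nu> m" for m
  have Pc: "P m \<in> carrier_mat n n" if "m \<le> Mn" for m
    using hat_carrier(1)[OF inj[OF that]] Xr by (simp add: P_def Pm_def)
  have PT: "transpose_mat (P m) = P m" if "m \<le> Mn" for m
    using hat_carrier(2)[OF inj[OF that]] by (simp add: P_def Pm_def)
  have Psym: "P m $$ (i,j) = P m $$ (j,i)" if "m \<le> Mn" "i < n" "j < n" for m i j
  proof -
    have "P m $$ (i,j) = transpose_mat (P m) $$ (i,j)" using PT[OF that(1)] by simp
    also have "\<dots> = P m $$ (j,i)" using Pc[OF that(1)] that by simp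
    finally show ?thesis .
  qed
  have Pmul: "P i * P j = P (min i j)" if "i \<le> Mn" "j \<le> Mn" for i j
  proof (cases "i \<le> j")
    case True
    thus ?thesis using hat_nest(2)[OF inj[OF that(1)] inj[OF that(2)] nu_le[OF True that(2)]]
      by (simp add: P_def Pm_def min_def)
  next
    case False
    thus ?thesis using hat_nest(1)[OF inj[OF that(2)] inj[OF that(1)] nu_le[of j i]] that
      by (simp add: P_def Pm_def min_def)
  qed
  have Pprod: "(\<Sum>k<n. P i $$ (r,k) * P j $$ (k,c)) = P (min i j) $$ (r,c)"
    if "i \<le> Mn" "j \<le> Mn" "r < n" "c < n" for i j r c
  proof -
    have "P (min i j) $$ (r,c) = (P i * P j) $$ (r,c)" using Pmul[OF that(1,2)] by simp
    also have "\<dots> = (\<Sum>k<n. P i $$ (r,k) * P j $$ (k,c))"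
      using Pc[OF that(1)] Pc[OF that(2)] that by (simp add: scalar_prod_def atLeast0LessThan)
    finally show ?thesis by simp
  qed
  have P0: "P 0 = 0\<^sub>m n n" using hat_zero[of X] nu0 Xr by (simp add: P_def Pm_def)
  have Pdiff: "\<exists>i<n. \<exists>k<n. P j $$ (i,k) \<noteq> P (j - 1) $$ (i,k)" if "1 \<le> j" "j \<le> Mn" for j
  proof (rule ccontr)
    assume "\<not> ?thesis"
    moreover have "P (j - 1) \<in> carrier_mat n n" using Pc[of "j - 1"] that by simp
    ultimately have "P j = P (j - 1)" using Pc[OF that(2)] by (intro eq_matI) auto
    have "P j \<noteq> P (j - 1)"
      using hat_strict[OF inj[of "j - 1"] inj[OF that(2)] nu_strict[of "j - 1" j]] that
      by (simp add: P_def Pm_def)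
    thus False using \<open>P j = P (j - 1)\<close> by simp
  qed
  define mu where "mu k = \<mu> $ k" for k
  define Om where "Om k l = \<Omega> $$ (k,l)" for k l
  define pe where "pe m i k = P m $$ (i,k)" for m i k
  define s where "s m = (\<Sum>i<n. \<Sum>k<n. mu i * pe m i k * mu k)" for m
  define t where "t m = (\<Sum>i<n. \<Sum>k<n. pe m i k * Om k i)" for m
  define a where "a = acoef X \<nu> \<mu>"
  define b where "b = bcoef X \<nu> \<Omega>"
  have Omsym: "Om k l = Om l k" if "k < n" "l < n" for k l
    using Omega_cov that by (simp add: Om_def mult.commute)
  have s0: "s 0 = 0" and t0: "t 0 = 0" using P0 by (simp_all add: s_def t_def pe_def)
  have a_eq: "a m = s m - s (m - 1)" if "1 \<le> m" "m \<le> Mn" for m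
  proof -
    have c1: "P m \<in> carrier_mat n n" "P (m - 1) \<in> carrier_mat n n" using Pc that by auto
    have D: "P m - P (m - 1) \<in> carrier_mat n n" using c1(2) by (rule minus_carrier_mat)
    have "a m = \<mu> \<bullet> ((P m - P (m - 1)) *\<^sub>v \<mu>)" by (simp add: a_def acoef_def P_def)
    also have "\<dots> = (\<Sum>i<n. \<Sum>k<n. \<mu> $ i * (P m - P (m - 1)) $$ (i,k) * \<mu> $ k)"
      by (rule sp_mat_sum[OF D mu_dim mu_dim])
    also have "\<dots> = (\<Sum>i<n. \<Sum>k<n. mu i * pe m i k * mu k - mu i * pe (m - 1) i k * mu k)"
      using c1 by (intro sum.cong refl) (simp add: mu_def pe_def algebra_simps)
    also have "\<dots> = s m - s (m - 1)" by (simp add: s_def sum_subtractf)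
    finally show ?thesis .
  qed
  have b_eq: "b m = t m - t (m - 1)" if "1 \<le> m" "m \<le> Mn" for m
  proof -
    have c1: "P m \<in> carrier_mat n n" "P (m - 1) \<in> carrier_mat n n" using Pc that by auto
    have D: "P m - P (m - 1) \<in> carrier_mat n n" using c1(2) by (rule minus_carrier_mat)
    have "b m = mtrace ((P m - P (m - 1)) * \<Omega>)" by (simp add: b_def bcoef_def P_def)
    also have "\<dots> = (\<Sum>i<n. \<Sum>k<n. (P m - P (m - 1)) $$ (i,k) * \<Omega> $$ (k,i))"
      by (rule trace_sum[OF D Omega_dim])
    also have "\<dots> = (\<Sum>i<n. \<Sum>k<n. pe m i k * Om k i - pe (m - 1) i k * Om k i)"
      using c1 by (intro sum.cong refl) (simp add: Om_def pe_def algebra_simps)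
    also have "\<dots> = t m - t (m - 1)" by (simp add: t_def sum_subtractf)
    finally show ?thesis .
  qed
  have tr1_eq: "mtrace (Pm X \<nu> 1 * \<Omega>) = t 1"
    using trace_sum[OF Pc[of 1] Omega_dim] Mn2 by (simp add: t_def pe_def Om_def P_def)
  have a1_eq: "\<mu> \<bullet> (Pm X \<nu> 1 *\<^sub>v \<mu>) = s 1"
    using sp_mat_sum[OF Pc[of 1] mu_dim mu_dim] Mn2 by (simp add: s_def pe_def mu_def P_def)
  have res_eq: "\<mu> \<bullet> ((1\<^sub>m n - Pm X \<nu> Mn) *\<^sub>v \<mu>) = (\<Sum>i<n. mu i * mu i) - s Mn"
  proof -
    have c1: "P Mn \<in> carrier_mat n n" using Pc by auto
    have D: "1\<^sub>m n - P Mn \<in> carrier_mat n n" using c1 by (rule minus_carrier_mat)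
    have "\<mu> \<bullet> ((1\<^sub>m n - Pm X \<nu> Mn) *\<^sub>v \<mu>) = (\<Sum>i<n. \<Sum>k<n. \<mu> $ i * (1\<^sub>m n - P Mn) $$ (i,k) * \<mu> $ k)"
      unfolding P_def[symmetric] by (rule sp_mat_sum[OF D mu_dim mu_dim])
    also have "\<dots> = (\<Sum>i<n. \<Sum>k<n. (if k = i then mu i * mu k else 0) - mu i * pe Mn i k * mu k)"
      using c1 by (intro sum.cong refl) (auto simp: mu_def pe_def algebra_simps)
    also have "\<dots> = (\<Sum>i<n. mu i * mu i) - s Mn"
      by (simp add: s_def sum_subtractf)
    finally show ?thesis .
  qed
  have pesym: "pe m i k = pe m k i" if "m \<le> Mn" "i < n" "k < n" for m i k
    using Psym[OF that] by (simp add: pe_def)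
  have peprod: "(\<Sum>i<n. pe m k i * pe m' i l) = pe (min m m') k l"
    if "m \<le> Mn" "m' \<le> Mn" "k < n" "l < n" for m m' k l
    using Pprod[OF that] by (simp add: pe_def)
  define V where "V m i = (\<Sum>k<n. pe m i k * mu k)" for m i
  have GV: "(\<Sum>i<n. V m i * V m' i) = s (min m m')" if mM: "m \<le> Mn" "m' \<le> Mn" for m m'
  proof -
    have "(\<Sum>i<n. V m i * V m' i) = (\<Sum>i<n. \<Sum>k<n. \<Sum>l<n. (pe m i k * mu k) * (pe m' i l * mu l))"
      by (simp add: V_def sum_product)
    also have "\<dots> = (\<Sum>k<n. \<Sum>l<n. \<Sum>i<n. (pe m i k * mu k) * (pe m' i l * mu l))" by (rule swap3)
    also have "\<dots> = (\<Sum>k<n. \<Sum>l<n. mu k * pe (min m m') k l * mu l)"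
    proof (intro sum.cong refl)
      fix k l assume kl: "k \<in> {..<n}" "l \<in> {..<n}"
      have "(\<Sum>i<n. (pe m i k * mu k) * (pe m' i l * mu l)) = (\<Sum>i<n. mu k * (pe m k i * pe m' i l) * mu l)"
      proof (rule sum.cong[OF refl])
        fix i assume "i \<in> {..<n}"
        hence "pe m i k = pe m k i" using pesym[OF mM(1), of i k] kl by simp
        thus "(pe m i k * mu k) * (pe m' i l * mu l) = mu k * (pe m k i * pe m' i l) * mu l" by simp
      qed
      also have "\<dots> = mu k * (\<Sum>i<n. pe m k i * pe m' i l) * mu l"
        by (simp add: sum_distrib_left sum_distrib_right)
      also have "\<dots> = mu k * pe (min m m') k l * mu l" using peprod[OF mM, of k l] kl by simp
      finally show "(\<Sum>i<n. (pe m i k * mu k) * (pe m' i l * mu l)) = mu k * pe (min m m') k l * mu l" .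
    qed
    also have "\<dots> = s (min m m')" by (simp add: s_def)
    finally show ?thesis .
  qed
  have HV: "(\<Sum>i<n. V m i * mu i) = s m" for m
    by (simp add: V_def s_def sum_distrib_right sum_distrib_left mult_ac)
  have TT: "(\<Sum>i<n. \<Sum>k<n. \<Sum>l<n. pe m i k * pe m' i l * Om k l) = t (min m m')"
    if mM: "m \<le> Mn" "m' \<le> Mn" for m m'
  proof -
    have "(\<Sum>i<n. \<Sum>k<n. \<Sum>l<n. pe m i k * pe m' i l * Om k l) = (\<Sum>k<n. \<Sum>l<n. \<Sum>i<n. pe m i k * pe m' i l * Om k l)"
      by (rule swap3)
    also have "\<dots> = (\<Sum>k<n. \<Sum>l<n. pe (min m m') k l * Om l k)"
    proof (intro sum.cong refl)
      fix k l assume kl: "k \<in> {..<n}" "l \<in> {..<n}"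
      have "(\<Sum>i<n. pe m i k * pe m' i l * Om k l) = (\<Sum>i<n. (pe m k i * pe m' i l) * Om k l)"
      proof (rule sum.cong[OF refl])
        fix i assume "i \<in> {..<n}"
        hence "pe m i k = pe m k i" using pesym[OF mM(1), of i k] kl by simp
        thus "pe m i k * pe m' i l * Om k l = (pe m k i * pe m' i l) * Om k l" by simp
      qed
      also have "\<dots> = (\<Sum>i<n. pe m k i * pe m' i l) * Om k l"
        by (simp add: sum_distrib_right)
      also have "\<dots> = pe (min m m') k l * Om l k" using peprod[OF mM, of k l] kl Omsym[of k l] by simp
      finally show "(\<Sum>i<n. pe m i k * pe m' i l * Om k l) = pe (min m m') k l * Om l k" .
    qed
    also have "\<dots> = t (min m m')" by (simp add: t_def)
    finally show ?thesis .
  qed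
  have a_nn: "0 \<le> a j" if "1 \<le> j" "j \<le> Mn" for j
  proof -
    have j1: "j - 1 \<le> Mn" "min j (j - 1) = j - 1" "min (j - 1) j = j - 1" using that by auto
    have "(\<Sum>i<n. (V j i - V (j - 1) i) * (V j i - V (j - 1) i))
        = (\<Sum>i<n. V j i * V j i) - (\<Sum>i<n. V j i * V (j - 1) i) - (\<Sum>i<n. V (j - 1) i * V j i) + (\<Sum>i<n. V (j - 1) i * V (j - 1) i)"
      by (simp add: algebra_simps sum_subtractf sum.distrib sum_distrib_left)
    also have "\<dots> = s j - s (j - 1)"
      using GV[of j j] GV[of j "j - 1"] GV[of "j - 1" j] GV[of "j - 1" "j - 1"] that j1 by simp
    finally have "a j = (\<Sum>i<n. (V j i - V (j - 1) i) * (V j i - V (j - 1) i))" using a_eq[OF that] by simp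
    thus ?thesis by (simp add: sum_nonneg)
  qed
  have b_pos: "0 < b j" if jr: "1 \<le> j" "j \<le> Mn" for j
  proof -
    have j1: "j - 1 \<le> Mn" "min j (j - 1) = j - 1" "min (j - 1) j = j - 1" using that by auto
    define D where "D i k = pe j i k - pe (j - 1) i k" for i k
    have "(\<Sum>i<n. \<Sum>k<n. \<Sum>l<n. D i k * D i l * Om k l)
       = (\<Sum>i<n. \<Sum>k<n. \<Sum>l<n. pe j i k * pe j i l * Om k l) - (\<Sum>i<n. \<Sum>k<n. \<Sum>l<n. pe j i k * pe (j - 1) i l * Om k l)
         - (\<Sum>i<n. \<Sum>k<n. \<Sum>l<n. pe (j - 1) i k * pe j i l * Om k l) + (\<Sum>i<n. \<Sum>k<n. \<Sum>l<n. pe (j - 1) i k * pe (j - 1) i l * Om k l)"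
      by (simp add: D_def algebra_simps sum_subtractf sum.distrib)
    also have "\<dots> = t j - t (j - 1)"
      using TT[of j j] TT[of j "j - 1"] TT[of "j - 1" j] TT[of "j - 1" "j - 1"] that j1 by simp
    finally have bD: "b j = (\<Sum>i<n. \<Sum>k<n. \<Sum>l<n. D i k * D i l * Om k l)" using b_eq[OF that] by simp
    define r where "r i = vec n (\<lambda>k. D i k)" for i
    have rq: "r i \<bullet> (\<Omega> *\<^sub>v r i) = (\<Sum>k<n. \<Sum>l<n. D i k * D i l * Om k l)" for i
      using sp_mat_sum[OF Omega_dim, of "r i" "r i"] by (simp add: r_def Om_def mult_ac)
    have rnn: "0 \<le> r i \<bullet> (\<Omega> *\<^sub>v r i)" for i
    proof (cases "r i = 0\<^sub>v n")
      case True thus ?thesis using Omega_dim by simp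
    next
      case False thus ?thesis using Omega_pd by (simp add: r_def less_imp_le)
    qed
    obtain i0 k0 where ik: "i0 < n" "k0 < n" "P j $$ (i0,k0) \<noteq> P (j - 1) $$ (i0,k0)" using Pdiff[OF jr] by blast
    have "r i0 \<noteq> 0\<^sub>v n"
    proof
      assume "r i0 = 0\<^sub>v n"
      hence "r i0 $ k0 = 0" using ik by simp
      thus False using ik by (simp add: r_def D_def pe_def)
    qed
    hence rpos: "0 < r i0 \<bullet> (\<Omega> *\<^sub>v r i0)" using Omega_pd by (simp add: r_def)
    have "0 < (\<Sum>i<n. r i \<bullet> (\<Omega> *\<^sub>v r i))"
      by (rule sum_pos2[of _ i0]) (use ik rpos rnn in auto)
    thus ?thesis using bD rq by simp
  qed
  define gam where "gam w j = (\<Sum>m\<in>{j..Mn}. w m)" for w :: "nat \<Rightarrow> real" and j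
  define res where "res = \<mu> \<bullet> ((1\<^sub>m n - Pm X \<nu> Mn) *\<^sub>v \<mu>)"
  have Rform: "risk Pr \<epsilon> X \<nu> Mn \<mu> w = (\<Sum>j\<in>{1..Mn}. a j * (1 - gam w j)^2 + b j * (gam w j)^2) + res" for w
  proof -
    define A where "A = Pw X \<nu> Mn w"
    define Ae where "Ae i k = (\<Sum>m\<in>{1..Mn}. w m * pe m i k)" for i k
    have Ac: "A \<in> carrier_mat n n" using Xr by (simp add: A_def Pw_def)
    have Aent: "A $$ (i,k) = Ae i k" if "i < n" "k < n" for i k
      using that Xr by (simp add: A_def Pw_def Ae_def pe_def P_def)
    have "risk Pr \<epsilon> X \<nu> Mn \<mu> w = (\<integral>\<omega>. (\<Sum>i<n. ((\<Sum>k<n. Ae i k * (mu k + \<epsilon> \<omega> $ k)) - mu i)^2) \<partial>Pr)"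
      unfolding risk_def A_def[symmetric]
    proof (rule Bochner_Integration.integral_cong[OF refl])
      fix \<omega> assume "\<omega> \<in> space Pr"
      hence ec: "\<epsilon> \<omega> \<in> carrier_vec n" using eps_dim by simp
      have yc: "\<mu> + \<epsilon> \<omega> \<in> carrier_vec n" using mu_dim ec by simp
      have "(let d = A *\<^sub>v (\<mu> + \<epsilon> \<omega>) - \<mu> in d \<bullet> d) = (\<Sum>i<n. ((\<Sum>k<n. A $$ (i,k) * (\<mu> + \<epsilon> \<omega>) $ k) - \<mu> $ i)^2)"
        by (rule dd_sum[OF Ac yc mu_dim])
      also have "\<dots> = (\<Sum>i<n. ((\<Sum>k<n. Ae i k * (mu k + \<epsilon> \<omega> $ k)) - mu i)^2)"
      proof (rule sum.cong[OF refl])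
        fix i assume i: "i \<in> {..<n}"
        have "(\<Sum>k<n. A $$ (i,k) * (\<mu> + \<epsilon> \<omega>) $ k) = (\<Sum>k<n. Ae i k * (mu k + \<epsilon> \<omega> $ k))"
          by (rule sum.cong[OF refl]) (use i ec mu_dim Aent in \<open>auto simp: mu_def\<close>)
        thus "((\<Sum>k<n. A $$ (i,k) * (\<mu> + \<epsilon> \<omega>) $ k) - \<mu> $ i)^2 = ((\<Sum>k<n. Ae i k * (mu k + \<epsilon> \<omega> $ k)) - mu i)^2"
          by (simp add: mu_def)
      qed
      finally show "(let d = A *\<^sub>v (\<mu> + \<epsilon> \<omega>) - \<mu> in d \<bullet> d) = (\<Sum>i<n. ((\<Sum>k<n. Ae i k * (mu k + \<epsilon> \<omega> $ k)) - mu i)^2)" .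
    qed
    also have "\<dots> = (\<Sum>i<n. ((\<Sum>k<n. Ae i k * mu k) - mu i)^2) + (\<Sum>i<n. \<Sum>k<n. \<Sum>l<n. Ae i k * Ae i l * Om k l)"
      by (rule risk_expand[OF prob]) (use eps_int eps_int2 eps_mean Omega_cov in \<open>auto simp: Om_def\<close>)
    also have "(\<Sum>i<n. ((\<Sum>k<n. Ae i k * mu k) - mu i)^2)
       = (\<Sum>m\<in>{1..Mn}. \<Sum>m'\<in>{1..Mn}. w m * w m' * s (min m m')) - 2 * (\<Sum>m\<in>{1..Mn}. w m * s m) + (\<Sum>i<n. mu i * mu i)"
    proof -
      define W where "W i = (\<Sum>m\<in>{1..Mn}. w m * V m i)" for i
      have Wi: "(\<Sum>k<n. Ae i k * mu k) = W i" for i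
      proof -
        have "(\<Sum>k<n. Ae i k * mu k) = (\<Sum>k<n. \<Sum>m\<in>{1..Mn}. w m * (pe m i k * mu k))"
          by (simp add: Ae_def sum_distrib_right sum_distrib_left mult_ac)
        also have "\<dots> = (\<Sum>m\<in>{1..Mn}. \<Sum>k<n. w m * (pe m i k * mu k))" by (rule sum.swap)
        also have "\<dots> = W i" by (simp add: W_def V_def sum_distrib_left)
        finally show ?thesis .
      qed
      have "(\<Sum>i<n. (W i - mu i)^2) = (\<Sum>i<n. W i * W i) - 2 * (\<Sum>i<n. W i * mu i) + (\<Sum>i<n. mu i * mu i)"
        by (simp add: power2_eq_square algebra_simps sum_subtractf sum.distrib sum_distrib_left)
      also have "(\<Sum>i<n. W i * W i) = (\<Sum>m\<in>{1..Mn}. \<Sum>m'\<in>{1..Mn}. w m * w m' * (\<Sum>i<n. V m i * V m' i))"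
        unfolding W_def by (rule bilin1)
      also have "\<dots> = (\<Sum>m\<in>{1..Mn}. \<Sum>m'\<in>{1..Mn}. w m * w m' * s (min m m'))"
        by (intro sum.cong refl) (simp add: GV)
      also have "(\<Sum>i<n. W i * mu i) = (\<Sum>m\<in>{1..Mn}. w m * s m)"
      proof -
        have "(\<Sum>i<n. W i * mu i) = (\<Sum>i<n. \<Sum>m\<in>{1..Mn}. w m * (V m i * mu i))"
          by (simp add: W_def sum_distrib_right sum_distrib_left mult_ac)
        also have "\<dots> = (\<Sum>m\<in>{1..Mn}. \<Sum>i<n. w m * (V m i * mu i))" by (rule sum.swap)
        also have "\<dots> = (\<Sum>m\<in>{1..Mn}. w m * s m)" by (simp add: sum_distrib_left[symmetric] HV)
        finally show ?thesis .
      qed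
      finally show ?thesis using Wi by simp
    qed
    also have "(\<Sum>i<n. \<Sum>k<n. \<Sum>l<n. Ae i k * Ae i l * Om k l) = (\<Sum>m\<in>{1..Mn}. \<Sum>m'\<in>{1..Mn}. w m * w m' * t (min m m'))"
    proof -
      have "(\<Sum>i<n. \<Sum>k<n. \<Sum>l<n. Ae i k * Ae i l * Om k l)
          = (\<Sum>m\<in>{1..Mn}. \<Sum>m'\<in>{1..Mn}. w m * w m' * (\<Sum>i<n. \<Sum>k<n. \<Sum>l<n. pe m i k * pe m' i l * Om k l))"
        unfolding Ae_def by (rule bilin3)
      also have "\<dots> = (\<Sum>m\<in>{1..Mn}. \<Sum>m'\<in>{1..Mn}. w m * w m' * t (min m m'))"
        by (intro sum.cong refl) (simp add: TT)
      finally show ?thesis .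
    qed
    finally have R1: "risk Pr \<epsilon> X \<nu> Mn \<mu> w = (\<Sum>m\<in>{1..Mn}. \<Sum>m'\<in>{1..Mn}. w m * w m' * (s (min m m') + t (min m m')))
        - 2 * (\<Sum>m\<in>{1..Mn}. w m * s m) + (\<Sum>i<n. mu i * mu i)"
      by (simp add: algebra_simps sum.distrib)
    have ab2: "(\<Sum>m\<in>{1..Mn}. \<Sum>m'\<in>{1..Mn}. w m * w m' * (s (min m m') + t (min m m')))
        = (\<Sum>j\<in>{1..Mn}. (a j + b j) * (gam w j)^2)"
    proof -
      have "(\<Sum>m\<in>{1..Mn}. \<Sum>m'\<in>{1..Mn}. w m * w m' * (s (min m m') + t (min m m')))
         = (\<Sum>j\<in>{1..Mn}. ((s j + t j) - (s (j - 1) + t (j - 1))) * (\<Sum>m\<in>{j..Mn}. w m)^2)"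
        using abel2[where f="\<lambda>k. s k + t k" and M=Mn and w=w] s0 t0 by simp
      also have "\<dots> = (\<Sum>j\<in>{1..Mn}. (a j + b j) * (gam w j)^2)"
        by (intro sum.cong refl) (simp add: a_eq b_eq gam_def)
      finally show ?thesis .
    qed
    have ab1: "(\<Sum>m\<in>{1..Mn}. w m * s m) = (\<Sum>j\<in>{1..Mn}. a j * gam w j)"
    proof -
      have "(\<Sum>m\<in>{1..Mn}. w m * s m) = (\<Sum>j\<in>{1..Mn}. (s j - s (j - 1)) * (\<Sum>m\<in>{j..Mn}. w m))"
        using abel1[where f=s and M=Mn and w=w] s0 by simp
      also have "\<dots> = (\<Sum>j\<in>{1..Mn}. a j * gam w j)"
        by (intro sum.cong refl) (simp add: a_eq gam_def)
      finally show ?thesis .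
    qed
    have sM: "s Mn = (\<Sum>j\<in>{1..Mn}. a j)"
      using tele_sum[of s Mn] s0 by (simp add: a_eq)
    have alg: "(\<Sum>j\<in>{1..Mn}. a j * (1 - gam w j)^2 + b j * (gam w j)^2)
       = (\<Sum>j\<in>{1..Mn}. (a j + b j) * (gam w j)^2) - 2 * (\<Sum>j\<in>{1..Mn}. a j * gam w j) + (\<Sum>j\<in>{1..Mn}. a j)"
    proof -
      have "(\<Sum>j\<in>{1..Mn}. a j * (1 - gam w j)^2 + b j * (gam w j)^2)
          = (\<Sum>j\<in>{1..Mn}. ((a j + b j) * (gam w j)^2 - 2 * (a j * gam w j)) + a j)"
        by (intro sum.cong refl) (simp add: power2_eq_square algebra_simps)
      thus ?thesis by (simp add: sum.distrib sum_subtractf sum_distrib_left)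
    qed
    show ?thesis using R1 ab2 ab1 sM alg res_eq by (simp add: res_def)
  qed
  have tr1b: "mtrace (Pm X \<nu> 1 * \<Omega>) = b 1" using tr1_eq b_eq[of 1] t0 Mn2 by simp
  have mu1a: "\<mu> \<bullet> (Pm X \<nu> 1 *\<^sub>v \<mu>) = a 1" using a1_eq a_eq[of 1] s0 Mn2 by simp
  define c where "c j = a j / (a j + b j)" for j
  have c01: "0 \<le> c j \<and> c j \<le> 1" if "1 \<le> j" "j \<le> Mn" for j
    using a_nn[OF that] b_pos[OF that] by (simp add: c_def divide_le_eq)
  have cmono: "c (Suc m) \<le> c m" if "1 \<le> m" "m < Mn" for m
  proof -
    have r1: "1 \<le> Suc m" "Suc m \<le> Mn" "m \<le> Mn" using that by auto
    have bp: "0 < b m" "0 < b (Suc m)" using b_pos r1 that by auto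
    have an: "0 \<le> a m" "0 \<le> a (Suc m)" using a_nn r1 that by auto
    have np: "0 < real n" using n_pos by simp
    have "a (Suc m) / (real n * b (Suc m)) \<le> a m / (real n * b m)"
      using theta_mono that by (simp add: a_def b_def)
    hence "a (Suc m) * (real n * b m) \<le> a m * (real n * b (Suc m))"
      using bp np by (simp add: divide_le_eq le_divide_eq mult_pos_pos field_simps)
    hence key: "a (Suc m) * b m \<le> a m * b (Suc m)" using np
      by (metis (no_types, opaque_lifting) mult.left_commute mult_le_cancel_left_pos)
    have "a (Suc m) * (a m + b m) \<le> a m * (a (Suc m) + b (Suc m))" using key by (simp add: algebra_simps)
    thus ?thesis using bp an by (simp add: c_def divide_le_eq le_divide_eq field_simps)
  qed
  define g where "g = (\<lambda>m. if m = 1 then 1 else a m / (a m + b m))"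
  have gc: "g m = (if m = 1 then 1 else c m)" for m by (simp add: g_def c_def)
  have g01: "0 \<le> g j \<and> g j \<le> 1" if "1 \<le> j" "j \<le> Mn" for j using c01[OF that] by (simp add: gc)
  have gmono: "g (Suc m) \<le> g m" if "1 \<le> m" "m < Mn" for m
    using cmono[OF that] c01[of "Suc m"] that by (auto simp: gc)
  define wstar where "wstar = (\<lambda>m. if m < Mn then g m - g (Suc m) else g Mn)"
  define wq where "wq = (\<lambda>m. if m < Mn then c m - c (Suc m) else c Mn)"
  have gws: "gam wstar j = g j" if "j \<le> Mn" for j
    unfolding gam_def wstar_def by (rule tele2[OF that])
  have gwq: "gam wq j = c j" if "j \<le> Mn" for j
    unfolding gam_def wq_def by (rule tele2[OF that])
  define F where "F w j = a j * (1 - gam w j)^2 + b j * (gam w j)^2" for w j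
  have split1: "(\<Sum>j\<in>{1..Mn}. h j) = h 1 + (\<Sum>j\<in>{2..Mn}. h j)" for h :: "nat \<Rightarrow> real"
    using Mn2 by (simp add: sum.atLeast_Suc_atMost numeral_2_eq_2)
  define minW where "minW = mtrace (Pm X \<nu> 1 * \<Omega>) + (\<Sum>m=2..Mn. a m * b m / (a m + b m)) + res"
  define minQ where "minQ = (\<Sum>m=1..Mn. a m * b m / (a m + b m)) + res"
  have Fopt: "F w j \<ge> a j * b j / (a j + b j)" if "1 \<le> j" "j \<le> Mn" for w j
    unfolding F_def using quad_bound(1)[OF a_nn[OF that] b_pos[OF that]] .
  have W1: "wstar \<in> Wset Mn"
  proof -
    have "0 \<le> wstar m \<and> wstar m \<le> 1" if "m \<in> {1..Mn}" for m
    proof (cases "m < Mn")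
      case True
      thus ?thesis using gmono[of m] g01[of m] g01[of "Suc m"] that by (auto simp: wstar_def)
    next
      case False thus ?thesis using g01[of Mn] that Mn2 by (auto simp: wstar_def)
    qed
    moreover have "(\<Sum>m=1..Mn. wstar m) = 1" using gws[of 1] Mn2 by (simp add: gam_def g_def)
    ultimately show ?thesis by (simp add: Wset_def)
  qed
  have W2: "risk Pr \<epsilon> X \<nu> Mn \<mu> wstar = minW"
  proof -
    have "(\<Sum>j\<in>{1..Mn}. F wstar j) = F wstar 1 + (\<Sum>j\<in>{2..Mn}. F wstar j)" by (rule split1)
    also have "F wstar 1 = b 1" using gws[of 1] Mn2 by (simp add: F_def g_def)
    also have "(\<Sum>j\<in>{2..Mn}. F wstar j) = (\<Sum>j\<in>{2..Mn}. a j * b j / (a j + b j))"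
    proof (rule sum.cong[OF refl])
      fix j assume j: "j \<in> {2..Mn}"
      hence "gam wstar j = a j / (a j + b j)" using gws[of j] by (simp add: g_def)
      thus "F wstar j = a j * b j / (a j + b j)" using quad_bound(2)[OF a_nn b_pos, of j j] j
        by (simp add: F_def)
    qed
    finally show ?thesis using Rform[of wstar] tr1b by (simp add: minW_def F_def)
  qed
  have W3: "\<forall>w\<in>Wset Mn. minW \<le> risk Pr \<epsilon> X \<nu> Mn \<mu> w"
  proof
    fix w assume "w \<in> Wset Mn"
    hence "gam w 1 = 1" by (simp add: Wset_def gam_def)
    hence F1: "F w 1 = b 1" by (simp add: F_def)
    have "(\<Sum>j\<in>{2..Mn}. a j * b j / (a j + b j)) \<le> (\<Sum>j\<in>{2..Mn}. F w j)"
      by (intro sum_mono Fopt) auto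
    moreover have "(\<Sum>j\<in>{1..Mn}. F w j) = F w 1 + (\<Sum>j\<in>{2..Mn}. F w j)" by (rule split1)
    ultimately show "minW \<le> risk Pr \<epsilon> X \<nu> Mn \<mu> w" using Rform[of w] F1 tr1b
      by (simp add: minW_def F_def)
  qed
  have Q1: "\<exists>w\<in>Qset Mn. risk Pr \<epsilon> X \<nu> Mn \<mu> w = minQ"
  proof
    show "wq \<in> Qset Mn"
    proof -
      have "0 \<le> wq m \<and> wq m \<le> 1" if "m \<in> {1..Mn}" for m
      proof (cases "m < Mn")
        case True
        thus ?thesis using cmono[of m] c01[of m] c01[of "Suc m"] that by (auto simp: wq_def)
      next
        case False thus ?thesis using c01[of Mn] that Mn2 by (auto simp: wq_def)
      qed
      thus ?thesis by (simp add: Qset_def)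
    qed
    have "(\<Sum>j\<in>{1..Mn}. F wq j) = (\<Sum>j\<in>{1..Mn}. a j * b j / (a j + b j))"
    proof (rule sum.cong[OF refl])
      fix j assume j: "j \<in> {1..Mn}"
      hence "gam wq j = a j / (a j + b j)" using gwq[of j] by (simp add: c_def)
      thus "F wq j = a j * b j / (a j + b j)" using quad_bound(2)[OF a_nn b_pos, of j j] j
        by (simp add: F_def)
    qed
    thus "risk Pr \<epsilon> X \<nu> Mn \<mu> wq = minQ" using Rform[of wq] by (simp add: minQ_def F_def)
  qed
  have Q2: "\<forall>w\<in>Qset Mn. minQ \<le> risk Pr \<epsilon> X \<nu> Mn \<mu> w"
  proof
    fix w assume "w \<in> Qset Mn"
    have "(\<Sum>j\<in>{1..Mn}. a j * b j / (a j + b j)) \<le> (\<Sum>j\<in>{1..Mn}. F w j)"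
      by (intro sum_mono Fopt) auto
    thus "minQ \<le> risk Pr \<epsilon> X \<nu> Mn \<mu> w" using Rform[of w] by (simp add: minQ_def F_def)
  qed
  have a1: "0 \<le> a 1" and b1: "0 < b 1" using a_nn[of 1] b_pos[of 1] Mn2 by auto
  have D0: "minW - minQ = b 1 - a 1 * b 1 / (a 1 + b 1)"
    using split1[of "\<lambda>m. a m * b m / (a m + b m)"] tr1b by (simp add: minW_def minQ_def)
  have D1: "minW - minQ = (mtrace (Pm X \<nu> 1 * \<Omega>))^2 / (\<mu> \<bullet> (Pm X \<nu> 1 *\<^sub>v \<mu>) + mtrace (Pm X \<nu> 1 * \<Omega>))"
  proof -
    have "a 1 + b 1 > 0" using a1 b1 by simp
    hence "b 1 - a 1 * b 1 / (a 1 + b 1) = (b 1)^2 / (a 1 + b 1)"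
      by (simp add: field_simps power2_eq_square)
    thus ?thesis using D0 tr1b mu1a by simp
  qed
  have D2: "minW - minQ \<le> mtrace (Pm X \<nu> 1 * \<Omega>)"
    using D0 tr1b a1 b1 by (simp add: divide_nonneg_nonneg)
  have main: "wstar \<in> Wset Mn \<and> risk Pr \<epsilon> X \<nu> Mn \<mu> wstar = minW \<and> (\<forall>w\<in>Wset Mn. minW \<le> risk Pr \<epsilon> X \<nu> Mn \<mu> w)
        \<and> (\<exists>w\<in>Qset Mn. risk Pr \<epsilon> X \<nu> Mn \<mu> w = minQ) \<and> (\<forall>w\<in>Qset Mn. minQ \<le> risk Pr \<epsilon> X \<nu> Mn \<mu> w)
        \<and> minW - minQ = (mtrace (Pm X \<nu> 1 * \<Omega>)) ^ 2 / (\<mu> \<bullet> (Pm X \<nu> 1 *\<^sub>v \<mu>) + mtrace (Pm X \<nu> 1 * \<Omega>))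
        \<and> minW - minQ \<le> mtrace (Pm X \<nu> 1 * \<Omega>)"
    using W1 W2 W3 Q1 Q2 D1 D2 by blast
  show ?thesis using main unfolding Let_def wstar_def g_def minW_def minQ_def res_def a_def b_def .
qed

end
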